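(* There exists an absolute constant $C$ such that the following holds. Let $W$ be a non-negative integer-valued random variable with $EW=\lambda\in(0,\infty)$, let $Y\sim\mathrm{Poi}(\lambda)$, let $\eta_k$ and $g_1$ be as defined in the context. Then for every integer $k\ge0$: $$E\,g_1((W+1)\wedge k)\le C(\eta_k+1)\Big(\frac1\lambda+\frac{(k+1-\lambda)_+^2}{\lambda^2}\Big),$$ $$E\big[(W\wedge k)\,g_1(W\wedge k)\big]\le C(\eta_k+1)\Big(1+\frac{(k-\lambda)_+^2}{\lambda}\Big),$$ $$E\big[(W\wedge k)^2\,g_1(W\wedge k)\big]\le C(\eta_k+1)\Big(\lambda+(k-\lambda)_+^2+\frac{(k-\lambda)_+^3}{\lambda}\Big).$$
   Context: $a\wedge b=\min(a,b)$, $x_+=\max(x,0)$. For integers $k\ge 0$, $\eta_k=\sup\{P(W\ge r)/P(Y\ge r): r \text{ integer},\ \lambda\le r\le k\}$ (supremum of the empty set equal to $0$). The function $g_1:\{0,1,2,\dots\}\to\mathbb R$ is defined by $g_1(0)=0$ and, for integers $w\ge1$, $g_1(w)=\frac{e^\lambda w!}{\lambda^{w+1}}P(Y\le w)-\frac{e^\lambda (w-1)!}{\lambda^{w}}P(Y\le w-1)$. *)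

theory Defs
  imports "HOL-Probability.Probability"
begin

text \<open>The law of the non-negative integer-valued random variable W is a pmf on nat;
  Y ~ Poi(lambda) is poisson_pmf lambda.\<close>

definition pos_part :: "real \<Rightarrow> real" where
  "pos_part x = max x 0"

definition eta :: "nat pmf \<Rightarrow> real \<Rightarrow> nat \<Rightarrow> real" where
  "eta pW lam k =
     (let S = {r::nat. lam \<le> real r \<and> r \<le> k}
      in if S = {} then 0
         else Max ((\<lambda>r. measure_pmf.prob pW {r..} / measure_pmf.prob (poisson_pmf lam) {r..}) ` S))"

definition g1 :: "real \<Rightarrow> nat \<Rightarrow> real" where
  "g1 lam w = (if w = 0 then 0 else
     exp lam * fact w / lam ^ (w + 1) * measure_pmf.prob (poisson_pmf lam) {..w}
     - exp lam * fact (w - 1) / lam ^ w * measure_pmf.prob (poisson_pmf lam) {..w - 1})"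

end

theory Submission
  imports Defs
begin



declare pmf_poisson[simp del]

lemma prob_atLeast_compl: "measure_pmf.prob (M::nat pmf) {N..} = 1 - measure_pmf.prob M {..<N}"
proof -
  have e: "space (measure_pmf M) - {..<N} = {N..}" by auto
  have "measure_pmf.prob M (space (measure_pmf M) - {..<N}) = 1 - measure_pmf.prob M {..<N}"
    by (rule measure_pmf.prob_compl) simp
  then show ?thesis unfolding e .
qed

lemma alg1:
  fixes l p w Q :: real
  assumes "0 < l" "0 < p" "0 < w"
  shows "Q / (l * p) - (Q - p) / (w * p) = 1 / w + (w - l) * Q / (l * w * p)"
  using assms by (simp add: field_simps)

lemma alg2:
  fixes l p w Q :: real
  assumes "0 < l" "0 < p" "0 < w" "w \<le> l" "Q \<ge> p * (1 + w / l)"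
  shows "1 / w + (w - l) * Q / (l * w * p) \<le> 1 / l"
proof -
  have "(w - l) * Q \<le> (w - l) * (p * (1 + w / l))"
    using assms by (intro mult_left_mono_neg) auto
  hence "(w - l) * Q / (l * w * p) \<le> (w - l) * (p * (1 + w / l)) / (l * w * p)"
    using assms by (intro divide_right_mono) auto
  also have "\<dots> = (w - l) * (l + w) / (l * l * w)" using assms by (simp add: field_simps)
  finally have "1 / w + (w - l) * Q / (l * w * p) \<le> 1 / w + (w - l) * (l + w) / (l * l * w)" by simp
  also have "\<dots> = w / (l * l)" using assms by (simp add: field_simps)
  also have "\<dots> \<le> 1 / l" using assms by (simp add: field_simps)
  finally show ?thesis .
qed

lemma alg3:
  fixes l p w Q :: real
  assumes "0 < l" "0 < p" "l < w" "Q \<le> 1"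
  shows "1 / w + (w - l) * Q / (l * w * p) \<le> 1 / l + ((w - l) / (w * p)) / l"
proof -
  have "(w - l) * Q \<le> (w - l)" using assms by (simp add: mult_left_le)
  hence "(w - l) * Q / (l * w * p) \<le> (w - l) / (l * w * p)"
    using assms by (intro divide_right_mono) auto
  moreover have "1 / w \<le> 1 / l" using assms by (simp add: frac_le)
  moreover have "(w - l) / (l * w * p) = ((w - l) / (w * p)) / l" by simp
  ultimately show ?thesis by linarith
qed

lemma alg4:
  fixes l p w Q :: real
  assumes "0 < l" "0 < p" "0 < w"
  shows "w * (1 / w + (w - l) * Q / (l * w * p)) = 1 + (w - l) * Q / (l * p)"
  using assms by (simp add: field_simps)

lemma tele: "f (min n (k::nat)) = f 0 + (\<Sum>r\<in>{1..k}. if r \<le> n then f r - f (r - 1) else (0::real))"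
proof (induction k)
  case 0 then show ?case by simp
next
  case (Suc k)
  have "{1..Suc k} = insert (Suc k) {1..k}" by auto
  then have "(\<Sum>r\<in>{1..Suc k}. if r \<le> n then f r - f (r - 1) else (0::real))
     = (if Suc k \<le> n then f (Suc k) - f k else 0) + (\<Sum>r\<in>{1..k}. if r \<le> n then f r - f (r - 1) else 0)"
    by simp
  then show ?case using Suc.IH by (auto simp: min_def)
qed

lemma integrable_min: "integrable (measure_pmf pW) (\<lambda>w. (h::nat \<Rightarrow> real) (min (w + d) k))"
proof (rule measure_pmf.integrable_const_bound[where B = "\<Sum>j\<le>k. \<bar>h j\<bar>"])
  show "AE x in measure_pmf pW. norm (h (min (x + d) k)) \<le> (\<Sum>j\<le>k. \<bar>h j\<bar>)"
    by (intro AE_I2) (auto intro!: member_le_sum)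
qed simp

lemma expect_layer:
  fixes f :: "nat \<Rightarrow> real" and pW :: "nat pmf"
  shows "measure_pmf.expectation pW (\<lambda>w. f (min (w + d) k)) =
     f 0 + (\<Sum>r\<in>{1..k}. measure_pmf.prob pW {r - d..} * (f r - f (r - 1)))"
proof -
  have this1: "(\<lambda>w. f (min (w + d) k)) = (\<lambda>w. f 0 + (\<Sum>r\<in>{1..k}. (f r - f (r - 1)) * indicator {r - d..} w))"
  proof (rule ext)
    fix w
    show "f (min (w + d) k) = f 0 + (\<Sum>r\<in>{1..k}. (f r - f (r - 1)) * indicator {r - d..} w)"
      by (subst tele[of f "w + d" k]) (intro arg_cong2[where f="(+)"] refl sum.cong, auto simp: indicator_def le_diff_conv)
  qed
  have ii: "\<And>r. integrable (measure_pmf pW) (\<lambda>w. (f r - f (r - 1)) * indicator {r - d..} w)"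
    by (intro integrable_mult_right integrable_real_indicator) (auto simp: less_top[symmetric])
  from this1 have "measure_pmf.expectation pW (\<lambda>w. f (min (w + d) k)) =
      measure_pmf.expectation pW (\<lambda>w. f 0 + (\<Sum>r\<in>{1..k}. (f r - f (r - 1)) * indicator {r - d..} w))"
    by simp
  also have "\<dots> = measure_pmf.expectation pW (\<lambda>w. f 0) + measure_pmf.expectation pW (\<lambda>w. \<Sum>r\<in>{1..k}. (f r - f (r - 1)) * indicator {r - d..} w)"
    by (rule Bochner_Integration.integral_add[OF _ Bochner_Integration.integrable_sum[OF ii]]) simp
  also have "measure_pmf.expectation pW (\<lambda>w. \<Sum>r\<in>{1..k}. (f r - f (r - 1)) * indicator {r - d..} w)
     = (\<Sum>r\<in>{1..k}. measure_pmf.expectation pW (\<lambda>w. (f r - f (r - 1)) * indicator {r - d..} w))"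
    by (rule Bochner_Integration.integral_sum) (rule ii)
  also have "\<dots> = (\<Sum>r\<in>{1..k}. measure_pmf.prob pW {r - d..} * (f r - f (r - 1)))"
    by (intro sum.cong refl) (simp add: mult.commute)
  finally show ?thesis by simp
qed

lemma alg5:
  fixes l p x :: real
  assumes "0 < l" "0 < p" "l < x"
  shows "(x - l) / p \<le> (x + 1 - l) / (p * l / (x + 1))"
proof -
  have "(x - l) * l \<le> (x + 1 - l) * (x + 1)" using assms by (intro mult_mono) auto
  hence "(x - l) * l / (l * p) \<le> (x + 1 - l) * (x + 1) / (l * p)"
    using assms by (intro divide_right_mono) auto
  moreover have "(x - l) * l / (l * p) = (x - l) / p" using assms by simp
  moreover have "(x + 1 - l) * (x + 1) / (l * p) = (x + 1 - l) / (p * l / (x + 1))"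
    using assms by (simp add: field_simps)
  ultimately show ?thesis by simp
qed

lemma alg6:
  fixes l p x :: real
  assumes "0 < l" "0 < p" "l < x"
  shows "(x - l) / (x * p) \<le> (x + 1 - l) / ((x + 1) * (p * l / (x + 1)))"
proof -
  have "(x - l) * l \<le> (x + 1 - l) * x" using assms by (intro mult_mono) auto
  hence "(x - l) * l / (x * l * p) \<le> (x + 1 - l) * x / (x * l * p)"
    using assms by (intro divide_right_mono) auto
  moreover have "(x - l) * l / (x * l * p) = (x - l) / (x * p)" using assms by simp
  moreover have "(x + 1 - l) * x / (x * l * p) = (x + 1 - l) / ((x + 1) * (p * l / (x + 1)))"
  proof -
    have "x + 1 > 0" using assms by simp
    hence e: "(x + 1) * (p * l / (x + 1)) = p * l" by simp
    have "x > 0" using assms by simp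
    then show ?thesis unfolding e by (simp add: mult.commute mult.left_commute)
  qed
  ultimately show ?thesis by simp
qed

lemma sum_step:
  fixes g :: "nat \<Rightarrow> real"
  assumes "g 0 \<ge> 0"
  shows "(\<Sum>r\<in>{1..<Suc k}. g r) \<le> (\<Sum>r\<in>{1..<k}. g r) + g k"
proof (cases "k = 0")
  case True then show ?thesis using assms by simp
next
  case False
  hence "{1..<Suc k} = insert k {1..<k}" by auto
  then show ?thesis by simp
qed

lemma sumA: "(\<Sum>r\<in>{1..<k}. max (real r - l) 0) \<le> (max (real k - l) 0)^2"
proof (induction k)
  case 0 then show ?case by simp
next
  case (Suc k)
  define a where "a = max (real k - l) 0"
  define b where "b = max (real (Suc k) - l) 0"
  have "(\<Sum>r\<in>{1..<Suc k}. max (real r - l) 0) \<le> (\<Sum>r\<in>{1..<k}. max (real r - l) 0) + a"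
    unfolding a_def by (rule sum_step) simp
  also have "\<dots> \<le> a^2 + a" using Suc.IH unfolding a_def by simp
  also have "\<dots> \<le> b^2"
  proof (cases "real k \<le> l")
    case True
    hence "a = 0" by (simp add: a_def)
    then show ?thesis by simp
  next
    case False
    hence ab: "a = real k - l" "b = a + 1" by (auto simp: a_def b_def)
    have "(a + 1)^2 = a^2 + 2 * a + 1" by (simp add: power2_eq_square algebra_simps)
    moreover have "a \<ge> 0" using False ab by simp
    ultimately show ?thesis using ab by simp
  qed
  finally show ?case unfolding b_def .
qed

lemma sumB: "(\<Sum>r\<in>{1..<k}. real r * max (real r - l) 0) \<le> real k * (max (real k - l) 0)^2"
proof (induction k)
  case 0 then show ?case by simp
next
  case (Suc k)
  define a where "a = max (real k - l) 0"
  define b where "b = max (real (Suc k) - l) 0"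
  have "(\<Sum>r\<in>{1..<Suc k}. real r * max (real r - l) 0) \<le> (\<Sum>r\<in>{1..<k}. real r * max (real r - l) 0) + real k * a"
    unfolding a_def by (rule sum_step) simp
  also have "\<dots> \<le> real k * a^2 + real k * a" using Suc.IH unfolding a_def by simp
  also have "\<dots> \<le> real (Suc k) * b^2"
  proof (cases "real k \<le> l")
    case True
    hence "a = 0" by (simp add: a_def)
    then show ?thesis by simp
  next
    case False
    hence ab: "a = real k - l" "b = a + 1" by (auto simp: a_def b_def)
    have a0: "a \<ge> 0" using False ab by simp
    have "real (Suc k) * (a + 1)^2 = real k * a^2 + real k * a + (real k * a + real k + a^2 + 2 * a + 1)"
      by (simp add: power2_eq_square algebra_simps)
    moreover have "real k * a \<ge> 0" "a^2 \<ge> 0" using a0 by auto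
    ultimately have "real k * a^2 + real k * a \<le> real (Suc k) * (a + 1)^2" using a0 by linarith
    then show ?thesis using ab(2) by simp
  qed
  finally show ?case unfolding b_def .
qed

lemma alg7:
  fixes e t :: real
  assumes "0 \<le> e" "0 \<le> t"
  shows "1 + e * (2 + 3 * t) \<le> 5 * (e + 1) * (1 + t)"
proof -
  have "e * t \<ge> 0" using assms by simp
  then show ?thesis using assms by (simp add: algebra_simps)
qed

lemma fin1:
  fixes l e K :: real
  assumes l: "0 < l" and e: "0 \<le> e" and K: "0 \<le> K"
  shows "1 / l + (e * ((if l < K then K / l else 0) + (max (K - l) 0)^2 / l) + (if l < K then (2 * l + 3) / l else 0)) / l
     \<le> 5 * (e + 1) * (1 / l + (max (K + 1 - l) 0)^2 / l^2)"
proof (cases "l < K")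
  case False
  hence "max (K - l) 0 = 0" by simp
  hence "1 / l + (e * ((if l < K then K / l else 0) + (max (K - l) 0)^2 / l) + (if l < K then (2 * l + 3) / l else 0)) / l = 1 / l"
    using False by simp
  also have "\<dots> \<le> 5 * (e + 1) * (1 / l)" using l e by (simp add: field_simps)
  also have "\<dots> \<le> 5 * (e + 1) * (1 / l + (max (K + 1 - l) 0)^2 / l^2)"
    using l e by (intro mult_left_mono) auto
  finally show ?thesis .
next
  case True
  define x where "x = K - l"
  have x0: "x > 0" using True by (simp add: x_def)
  have m1: "max (K - l) 0 = x" "max (K + 1 - l) 0 = x + 1" using x0 by (auto simp: x_def)
  have lhs: "1 / l + (e * ((if l < K then K / l else 0) + (max (K - l) 0)^2 / l) + (if l < K then (2 * l + 3) / l else 0)) / l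
      = (l + e * (l + x + x^2) + 2 * l + 3) / l^2"
    unfolding m1 using True l by (simp add: x_def field_simps power2_eq_square)
  have rhs: "5 * (e + 1) * (1 / l + (max (K + 1 - l) 0)^2 / l^2) = 5 * (e + 1) * (l + (x + 1)^2) / l^2"
    unfolding m1 using l by (simp add: field_simps power2_eq_square)
  have n1: "e * (l + x + x^2) \<le> e * (5 * (l + (x + 1)^2))"
    using e x0 l by (intro mult_left_mono) (auto simp: power2_eq_square algebra_simps)
  have n2: "3 * l + 3 \<le> 5 * (l + (x + 1)^2)" using x0 l by (simp add: power2_eq_square algebra_simps)
  have "l + e * (l + x + x^2) + 2 * l + 3 \<le> 5 * (e + 1) * (l + (x + 1)^2)"
    using n1 n2 by (simp add: algebra_simps)
  hence "(l + e * (l + x + x^2) + 2 * l + 3) / l^2 \<le> 5 * (e + 1) * (l + (x + 1)^2) / l^2"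
    using l by (intro divide_right_mono) auto
  then show ?thesis unfolding lhs rhs .
qed

lemma fin2:
  fixes l e K :: real
  assumes l: "0 < l" and e: "0 \<le> e" and K: "l < K \<Longrightarrow> 1 \<le> K"
  shows "1 + e * (l + max (K - l) 0 + (max (K - l) 0)^2) / l \<le> 5 * (e + 1) * (1 + (max (K - l) 0)^2 / l)"
proof -
  define x where "x = max (K - l) 0"
  have x0: "x \<ge> 0" by (simp add: x_def)
  have hx: "x \<le> l + 2 * x^2"
  proof (cases "x \<le> 1/2")
    case True
    show ?thesis
    proof (cases "x = 0")
      case True then show ?thesis using l by simp
    next
      case False
      hence "l < K" "x = K - l" using x0 by (auto simp: x_def max_def split: if_splits)
      hence "l \<ge> 1/2" using K \<open>x \<le> 1/2\<close> by linarith
      then show ?thesis using \<open>x \<le> 1/2\<close> by (smt (verit) zero_le_power2)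
    qed
  next
    case False
    have "x * 1 \<le> x * (2 * x)" using False by (intro mult_left_mono) auto
    then show ?thesis using l by (simp add: power2_eq_square)
  qed
  have "x / l \<le> (l + 2 * x^2) / l" using hx l by (intro divide_right_mono) auto
  hence hx': "x / l \<le> 1 + 2 * (x^2 / l)" using l by (simp add: add_divide_distrib)
  have "e * (l + x + x^2) / l = e * (1 + x / l + x^2 / l)" using l by (simp add: field_simps)
  also have "\<dots> \<le> e * (2 + 3 * (x^2 / l))" using hx' e by (intro mult_left_mono) auto
  finally have a: "e * (l + x + x^2) / l \<le> e * (2 + 3 * (x^2 / l))" .
  have t0: "x^2 / l \<ge> 0" using l by simp
  have "1 + e * (2 + 3 * (x^2 / l)) \<le> 5 * (e + 1) * (1 + x^2 / l)" by (rule alg7[OF e t0])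
  then show ?thesis using a unfolding x_def by simp
qed

lemma fin3:
  fixes l e K :: real
  assumes l: "0 < l" and e: "0 \<le> e" and K: "l < K \<Longrightarrow> 1 \<le> K" and K0: "0 \<le> K"
  shows "l + e * ((l + max (K - l) 0)^2 + K * (max (K - l) 0)^2) / l
     \<le> 5 * (e + 1) * (l + (max (K - l) 0)^2 + (max (K - l) 0)^3 / l)"
proof -
  define x where "x = max (K - l) 0"
  have x0: "x \<ge> 0" by (simp add: x_def)
  have Kx: "K * x^2 = l * x^2 + x^3"
  proof (cases "l < K")
    case True then have K': "K = l + x" by (simp add: x_def)
    show ?thesis unfolding K' by (simp add: power2_eq_square power3_eq_cube algebra_simps)
  next
    case False then have "x = 0" by (simp add: x_def)
    then show ?thesis by simp
  qed
  have t1: "(l + x)^2 \<le> 2 * l^2 + 2 * x^2"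
  proof -
    have "0 \<le> (l - x)^2" by simp
    then show ?thesis by (simp add: power2_eq_square algebra_simps)
  qed
  have hx: "x^2 / l \<le> 2 * x^2 + 2 * (x^3 / l)"
  proof (cases "x \<le> 1/2")
    case True
    show ?thesis
    proof (cases "x = 0")
      case True then show ?thesis by simp
    next
      case False
      hence "l < K" "x = K - l" using x0 by (auto simp: x_def max_def split: if_splits)
      hence "l \<ge> 1/2" using K \<open>x \<le> 1/2\<close> by linarith
      hence "x^2 / l \<le> x^2 / (1/2)" using l by (intro divide_left_mono) auto
      moreover have "x^3 / l \<ge> 0" using x0 l by simp
      ultimately show ?thesis by simp
    qed
  next
    case False
    have "x^2 * 1 \<le> x^2 * (2 * x)" using False by (intro mult_left_mono) auto
    hence "x^2 \<le> 2 * x^3" by (simp add: power2_eq_square power3_eq_cube algebra_simps)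
    hence "x^2 / l \<le> (2 * x^3) / l" using l by (intro divide_right_mono) auto
    moreover have "(2 * x^3) / l = 2 * (x^3 / l)" by simp
    moreover have "x^2 \<ge> 0" by simp
    ultimately show ?thesis by linarith
  qed
  have "((l + x)^2 + K * x^2) / l \<le> (2 * l^2 + 2 * x^2 + l * x^2 + x^3) / l"
    using t1 Kx l by (intro divide_right_mono) auto
  also have "\<dots> = 2 * l + 2 * (x^2 / l) + x^2 + x^3 / l" using l by (simp add: field_simps power2_eq_square)
  also have "\<dots> \<le> 2 * l + 5 * x^2 + 5 * (x^3 / l)" using hx by simp
  also have "\<dots> \<le> 5 * (l + x^2 + x^3 / l)" using l by simp
  finally have a: "((l + x)^2 + K * x^2) / l \<le> 5 * (l + x^2 + x^3 / l)" .
  define S where "S = l + x^2 + x^3 / l"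
  have S0: "S \<ge> 0" using l x0 by (simp add: S_def)
  have "e * (((l + x)^2 + K * x^2) / l) \<le> e * (5 * S)" using a e by (intro mult_left_mono) (auto simp: S_def)
  moreover have "l \<le> 5 * S" using S0 x0 l by (simp add: S_def)
  moreover have "e * S \<ge> 0" using e S0 by simp
  ultimately have "l + e * (((l + x)^2 + K * x^2) / l) \<le> 5 * (e + 1) * S" by (simp add: algebra_simps)
  then show ?thesis unfolding S_def x_def by simp
qed

context fixes l :: real assumes lpos: "0 < l"
begin

abbreviation "Y \<equiv> poisson_pmf l"
abbreviation "pp j \<equiv> pmf (poisson_pmf l) j"

lemma pp_eq: "pp j = l ^ j / fact j * exp (- l)"
  using lpos by (simp add: pmf_poisson)

lemma pp_pos: "pp j > 0"
  using lpos by (simp add: pp_eq)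

lemma pp_Suc: "pp (Suc j) = pp j * l / real (Suc j)"
  using lpos by (simp add: pp_eq field_simps)

lemma pp_sums: "pp sums 1"
proof -
  have "(\<lambda>n. l^n /\<^sub>R fact n) sums exp l" by (rule exp_converges)
  hence "(\<lambda>n. (l^n /\<^sub>R fact n) * exp (-l)) sums (exp l * exp (-l))" by (rule sums_mult2)
  moreover have "exp l * exp (-l) = 1" by (simp add: exp_minus)
  moreover have "(\<lambda>n. (l^n /\<^sub>R fact n) * exp (-l)) = (\<lambda>n. pp n)"
    by (rule ext) (simp add: pp_eq divide_inverse)
  ultimately show ?thesis by simp
qed

lemma prob_atMost: "measure_pmf.prob Y {..w} = (\<Sum>j\<le>w. pp j)"
  by (simp add: measure_measure_pmf_finite)

lemma prob_atLeast: "measure_pmf.prob Y {s..} = (\<Sum>i. pp (i + s))"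
proof -
  have "measure_pmf.prob Y {s..} = 1 - measure_pmf.prob Y {..<s}"
    by (rule prob_atLeast_compl)
  also have "\<dots> = 1 - (\<Sum>j<s. pp j)" by (simp add: measure_measure_pmf_finite)
  also have "\<dots> = (\<Sum>i. pp (i + s))"
    using suminf_split_initial_segment[OF sums_summable[OF pp_sums], of s] sums_unique[OF pp_sums]
    by simp
  finally show ?thesis .
qed

lemma pp_geom: "pp (i + s) \<le> pp s * (l / (s+1)) ^ i"
proof (induction i)
  case 0 then show ?case by simp
next
  case (Suc i)
  have "pp (Suc i + s) = pp (i + s) * l / real (Suc (i + s))" using pp_Suc by simp
  also have "\<dots> = pp (i + s) * (l / real (Suc (i + s)))" by simp
  also have "\<dots> \<le> pp (i+s) * (l / (s+1))"
    using lpos pp_pos[of "i+s"] by (intro mult_left_mono divide_left_mono) auto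
  also have "\<dots> \<le> pp s * (l / (s+1)) ^ i * (l / (s+1))"
    using Suc.IH lpos by (intro mult_right_mono) auto
  finally show ?case by (simp add: field_simps)
qed

lemma tail_bound:
  assumes "l < real s + 1"
  shows "measure_pmf.prob Y {s..} \<le> pp s * ((s+1) / (s+1-l))"
proof -
  define q where "q = l / (s+1)"
  have q0: "0 \<le> q" "q < 1" using lpos assms by (auto simp: q_def field_simps)
  have sg: "summable (\<lambda>i. pp s * q ^ i)" using q0 by (intro summable_mult summable_geometric) auto
  have "measure_pmf.prob Y {s..} = (\<Sum>i. pp (i + s))" by (rule prob_atLeast)
  also have "\<dots> \<le> (\<Sum>i. pp s * q ^ i)"
  proof (rule suminf_le)
    show "\<And>i. pp (i + s) \<le> pp s * q ^ i" using pp_geom q_def by simp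
    show "summable (\<lambda>i. pp (i + s))"
      by (rule summable_comparison_test'[OF sg]) (use pp_geom q_def in auto)
  qed (rule sg)
  also have "\<dots> = pp s * (1 / (1 - q))" using q0 by (simp add: suminf_mult suminf_geometric)
  also have "1 / (1 - q) = (s+1) / (s+1-l)" using assms by (simp add: q_def field_simps)
  finally show ?thesis by (simp add: add.commute)
qed

lemma mode:
  assumes "real m < l" "l < real m + 1"
  shows "pp j \<le> pp m"
proof (cases "j \<le> m")
  case True
  have "pp (m - i) \<le> pp m" if "i \<le> m" for i using that
  proof (induction i)
    case (Suc i)
    have "pp (Suc (m - Suc i)) = pp (m - Suc i) * l / real (Suc (m - Suc i))" by (rule pp_Suc)
    moreover have "Suc (m - Suc i) = m - i" using Suc by simp
    moreover have "real (m - i) \<le> l" using Suc assms by linarith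
    ultimately have e: "pp (m - i) = pp (m - Suc i) * (l / real (m - i))" by simp
    have "m - i > 0" using Suc by simp
    hence "l / real (m - i) \<ge> 1" using \<open>real (m - i) \<le> l\<close> by (simp add: field_simps)
    hence "pp (m - Suc i) * 1 \<le> pp (m - Suc i) * (l / real (m - i))"
      using pp_pos[of "m - Suc i"] by (intro mult_left_mono) auto
    hence "pp (m - i) \<ge> pp (m - Suc i)" using e by simp
    then show ?case using Suc.IH Suc.prems by (meson Suc_leD order_trans)
  qed simp
  moreover have "m - (m - j) = j" using True by simp
  ultimately show ?thesis by (metis diff_le_self)
next
  case False
  have "pp (m + i) \<le> pp m" for i
  proof (induction i)
    case (Suc i)
    have "pp (Suc (m + i)) = pp (m + i) * (l / real (Suc (m + i)))" using pp_Suc by simp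
    moreover have "l / real (Suc (m + i)) \<le> 1" using assms by (simp add: field_simps)
    moreover have "pp (m + i) * (l / real (Suc (m + i))) \<le> pp (m + i) * 1"
      using pp_pos[of "m+i"] \<open>l / real (Suc (m + i)) \<le> 1\<close> by (intro mult_left_mono) auto
    ultimately have "pp (Suc (m + i)) \<le> pp (m + i)" by simp
    then show ?case using Suc.IH by (metis add_Suc_right order_trans)
  qed simp
  moreover have "m + (j - m) = j" using False by simp
  ultimately show ?thesis by metis
qed

lemma mode_lower:
  assumes "real m < l" "l < real m + 1"
  shows "pp m \<ge> 1 / (2 * l + 3)"
proof -
  define N where "N = nat \<lceil>2 * l\<rceil>"
  have N1: "2 * l \<le> real N" "real N \<le> 2 * l + 1" using lpos by (auto simp: N_def)
  have "measure_pmf.prob Y {..<N} + measure_pmf.prob Y {N..} = 1"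
  proof -
    show ?thesis by (simp add: prob_atLeast_compl)
  qed
  moreover have "measure_pmf.prob Y {..<N} \<le> N * pp m"
  proof -
    have "measure_pmf.prob Y {..<N} = (\<Sum>j<N. pp j)" by (simp add: measure_measure_pmf_finite)
    also have "\<dots> \<le> (\<Sum>j<N. pp m)" by (intro sum_mono mode assms)
    finally show ?thesis by (simp add: add.commute)
  qed
  moreover have "measure_pmf.prob Y {N..} \<le> 2 * pp m"
  proof -
    have "measure_pmf.prob Y {N..} \<le> pp N * ((real N+1) / (real N+1-l))" using N1 by (intro tail_bound) auto
    also have "(real N+1) / (real N+1-l) \<le> 2" using N1 lpos by (simp add: field_simps)
    hence "pp N * ((real N+1) / (real N+1-l)) \<le> pp N * 2" using pp_pos[of N] by (intro mult_left_mono) auto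
    also have "\<dots> \<le> 2 * pp m" using mode[OF assms, of N] by simp
    finally show ?thesis .
  qed
  ultimately have "1 \<le> real N * pp m + 2 * pp m" by linarith
  also have "\<dots> = (real N + 2) * pp m" by (simp add: distrib_right)
  also have "\<dots> \<le> (2 * l + 3) * pp m" using N1 pp_pos[of m] by (intro mult_right_mono) auto
  finally have "1 \<le> (2 * l + 3) * pp m" .
  moreover have "2 * l + 3 > 0" using lpos by simp
  ultimately show ?thesis by (simp add: divide_le_eq mult.commute)
qed

abbreviation "QQ w \<equiv> measure_pmf.prob (poisson_pmf l) {..w}"

lemma QQ_Suc: "QQ (Suc n) = QQ n + pp (Suc n)"
  by (simp add: prob_atMost)

lemma g1_formula: "g1 l (Suc n) = 1 / real (Suc n) + (real (Suc n) - l) * QQ (Suc n) / (l * real (Suc n) * pp (Suc n))"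
proof -
  have c1: "exp l * fact (Suc n) / l ^ (Suc n + 1) = 1 / (l * pp (Suc n))"
    using lpos by (simp add: pp_eq exp_minus field_simps)
  have c2: "exp l * fact (Suc n - 1) / l ^ (Suc n) = 1 / (real (Suc n) * pp (Suc n))"
  proof -
    have e: "real (Suc n) * pp (Suc n) = l ^ Suc n / fact n * exp (- l)"
      using lpos by (simp add: pp_eq fact_Suc field_simps del: of_nat_Suc)
    have "1 / (l ^ Suc n / fact n * exp (- l)) = exp l * fact n / l ^ Suc n"
      using lpos by (simp add: exp_minus field_simps)
    then show ?thesis unfolding e by simp
  qed
  have "g1 l (Suc n) = QQ (Suc n) / (l * pp (Suc n)) - QQ n / (real (Suc n) * pp (Suc n))"
    unfolding g1_def using c1 c2 by simp
  also have "\<dots> = 1 / real (Suc n) + (real (Suc n) - l) * QQ (Suc n) / (l * real (Suc n) * pp (Suc n))"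
  proof -
    have e: "QQ n = QQ (Suc n) - pp (Suc n)" using QQ_Suc by simp
    show ?thesis unfolding e by (rule alg1[OF lpos pp_pos]) simp
  qed
  finally show ?thesis .
qed

definition "psi0 w = (if l < real w then (real w - l) / (real w * pp w) else 0)"
definition "phi1 w = (if l < real w then (real w - l) / pp w else 0)"

lemma QQ_le1: "QQ w \<le> 1" by simp
lemma QQ_ge0: "QQ w \<ge> 0" by simp

lemma g1_bound: "g1 l w \<le> 1 / l + psi0 w / l"
proof (cases w)
  case 0
  then show ?thesis using lpos by (simp add: g1_def psi0_def)
next
  case (Suc n)
  show ?thesis
  proof (cases "real w \<le> l")
    case True
    have "pp n \<le> (\<Sum>j\<le>n. pp j)" by (rule member_le_sum) (use pp_pos in \<open>auto intro: less_imp_le\<close>)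
    hence "QQ (Suc n) \<ge> pp (Suc n) + pp n" using QQ_Suc[of n] by (simp add: prob_atMost)
    moreover have "pp n = pp (Suc n) * real (Suc n) / l" using pp_Suc[of n] lpos by (simp add: field_simps)
    ultimately have "QQ (Suc n) \<ge> pp (Suc n) * (1 + real (Suc n) / l)" by (simp add: algebra_simps)
    hence "g1 l w \<le> 1 / l" unfolding Suc g1_formula using True Suc
      by (intro alg2[OF lpos pp_pos]) auto
    moreover have "psi0 w = 0" using True by (simp add: psi0_def)
    ultimately show ?thesis by simp
  next
    case False
    have "g1 l w \<le> 1 / l + ((real w - l) / (real w * pp w)) / l" unfolding Suc g1_formula using False Suc
      by (intro alg3[OF lpos pp_pos]) auto
    then show ?thesis using False by (simp add: psi0_def)
  qed
qed

lemma wg1_bound: "real w * g1 l w \<le> 1 + phi1 w / l"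
proof (cases w)
  case 0
  then show ?thesis using lpos by (simp add: g1_def phi1_def)
next
  case (Suc n)
  have e: "real w * g1 l w = 1 + (real w - l) * QQ w / (l * pp w)"
    unfolding Suc g1_formula by (rule alg4[OF lpos pp_pos]) simp
  show ?thesis
  proof (cases "real w \<le> l")
    case True
    have "(real w - l) * QQ w \<le> 0" using True by (simp add: mult_nonpos_nonneg)
    hence "(real w - l) * QQ w / (l * pp w) \<le> 0" by (rule divide_nonpos_pos) (use lpos pp_pos[of w] in auto)
    then show ?thesis unfolding e using True by (simp add: phi1_def)
  next
    case False
    have "(real w - l) * QQ w \<le> (real w - l)" using False by (simp add: mult_left_le)
    hence "(real w - l) * QQ w / (l * pp w) \<le> (real w - l) / (l * pp w)"
      using lpos pp_pos[of w] by (intro divide_right_mono) auto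
    then show ?thesis unfolding e using False by (simp add: phi1_def mult.commute)
  qed
qed

abbreviation "TT s \<equiv> measure_pmf.prob (poisson_pmf l) {s..}"

lemma TT_Suc: "TT j = pp j + TT (Suc j)"
proof -
  have "TT j = 1 - (\<Sum>i<j. pp i)" by (simp add: prob_atLeast_compl measure_measure_pmf_finite)
  moreover have "TT (Suc j) = 1 - (\<Sum>i<Suc j. pp i)" by (simp add: prob_atLeast_compl measure_measure_pmf_finite)
  ultimately show ?thesis by simp
qed

lemma TT_pos: "TT s > 0"
proof -
  have "TT s \<ge> pp s" using TT_Suc[of s] by simp
  then show ?thesis using pp_pos[of s] by simp
qed

lemma eta_nonneg: "eta pW l k \<ge> 0"
proof -
  define S where "S = {r::nat. l \<le> real r \<and> r \<le> k}"
  have fin: "finite S" unfolding S_def by (rule finite_subset[of _ "{..k}"]) auto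
  show ?thesis
  proof (cases "S = {}")
    case True then show ?thesis by (simp add: eta_def S_def[symmetric])
  next
    case False
    then obtain r where r: "r \<in> S" by auto
    have "0 \<le> measure_pmf.prob pW {r..} / TT r" by simp
    also have "\<dots> \<le> Max ((\<lambda>r. measure_pmf.prob pW {r..} / TT r) ` S)"
      using fin r by (intro Max_ge) auto
    finally show ?thesis using False by (simp add: eta_def S_def[symmetric])
  qed
qed

lemma eta_ge:
  assumes "l \<le> real r" "r \<le> k"
  shows "measure_pmf.prob pW {r..} \<le> eta pW l k * TT r"
proof -
  define S where "S = {r::nat. l \<le> real r \<and> r \<le> k}"
  have fin: "finite S" unfolding S_def by (rule finite_subset[of _ "{..k}"]) auto
  have r: "r \<in> S" using assms by (simp add: S_def)
  have "measure_pmf.prob pW {r..} / TT r \<le> Max ((\<lambda>r. measure_pmf.prob pW {r..} / TT r) ` S)"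
    using fin r by (intro Max_ge) auto
  also have "\<dots> = eta pW l k" using r by (auto simp: eta_def S_def[symmetric])
  finally show ?thesis using TT_pos[of r] by (simp add: divide_le_eq)
qed

lemma abel:
  fixes f :: "nat \<Rightarrow> real"
  assumes "f 0 = 0" "d \<le> 1"
  shows "(\<Sum>r\<in>{1..k}. TT (r - d) * (f r - f (r - 1))) = TT (k - d) * f k + (\<Sum>r\<in>{1..<k}. f r * pp (r - d))"
proof (induction k)
  case 0 then show ?case using assms by simp
next
  case (Suc k)
  have s1: "{1..Suc k} = insert (Suc k) {1..k}" by auto
  have "(\<Sum>r\<in>{1..Suc k}. TT (r - d) * (f r - f (r - 1))) = TT (Suc k - d) * (f (Suc k) - f k) + (TT (k - d) * f k + (\<Sum>r\<in>{1..<k}. f r * pp (r - d)))"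
    unfolding s1 using Suc.IH by simp
  also have "\<dots> = TT (Suc k - d) * f (Suc k) + (\<Sum>r\<in>{1..<Suc k}. f r * pp (r - d))"
  proof (cases "k = 0")
    case True then show ?thesis using assms by simp
  next
    case False
    have s2: "{1..<Suc k} = insert k {1..<k}" using False by auto
    have "Suc k - d = Suc (k - d)" using False assms by simp
    moreover have "TT (k - d) = pp (k - d) + TT (Suc (k - d))" by (rule TT_Suc)
    ultimately show ?thesis unfolding s2 by (simp add: algebra_simps)
  qed
  finally show ?case .
qed

lemma phi1_nonneg: "phi1 n \<ge> 0"
  using pp_pos[of n] by (simp add: phi1_def)

lemma psi0_nonneg: "psi0 n \<ge> 0"
  using pp_pos[of n] by (simp add: psi0_def)

lemma phi1_mono: "phi1 n \<le> phi1 (Suc n)"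
proof (cases "l < real n")
  case True
  have "phi1 n = (real n - l) / pp n" using True by (simp add: phi1_def)
  also have "\<dots> \<le> (real n + 1 - l) / (pp n * l / (real n + 1))"
    by (rule alg5[OF lpos pp_pos True])
  also have "\<dots> = phi1 (Suc n)" using True by (simp add: phi1_def pp_Suc add.commute)
  finally show ?thesis .
next
  case False
  then show ?thesis using phi1_nonneg[of "Suc n"] by (simp add: phi1_def)
qed

lemma psi0_mono: "psi0 n \<le> psi0 (Suc n)"
proof (cases "l < real n")
  case True
  have "psi0 n = (real n - l) / (real n * pp n)" using True by (simp add: psi0_def)
  also have "\<dots> \<le> (real n + 1 - l) / ((real n + 1) * (pp n * l / (real n + 1)))"
    by (rule alg6[OF lpos pp_pos True])
  also have "\<dots> = psi0 (Suc n)" using True by (simp add: psi0_def pp_Suc add.commute)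
  finally show ?thesis .
next
  case False
  then show ?thesis using psi0_nonneg[of "Suc n"] by (simp add: psi0_def)
qed

lemma phi2_mono: "real n * phi1 n \<le> real (Suc n) * phi1 (Suc n)"
  using phi1_mono[of n] phi1_nonneg[of n] by (intro mult_mono) auto

lemma phi1_zero: "real n \<le> l \<Longrightarrow> phi1 n = 0" by (simp add: phi1_def)
lemma psi0_zero: "real n \<le> l \<Longrightarrow> psi0 n = 0" by (simp add: psi0_def)

lemma term_cmp:
  fixes f :: "nat \<Rightarrow> real"
  assumes mono: "f (r - 1) \<le> f r" and zero: "real r \<le> l \<Longrightarrow> f r = f (r - 1)"
    and r: "1 \<le> r" "r \<le> k" and d: "d \<le> 1"
  shows "measure_pmf.prob pW {r - d..} * (f r - f (r - 1))
     \<le> eta pW l k * TT (r - d) * (f r - f (r - 1)) + (if real (r - d) < l \<and> l < real r then f r - f (r - 1) else 0)"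
proof -
  have D: "f r - f (r - 1) \<ge> 0" using mono by simp
  have E: "eta pW l k * TT (r - d) * (f r - f (r - 1)) \<ge> 0" using eta_nonneg D by simp
  show ?thesis
  proof (cases "real r \<le> l")
    case True then show ?thesis using zero E by simp
  next
    case False
    show ?thesis
    proof (cases "l \<le> real (r - d)")
      case True
      have "measure_pmf.prob pW {r - d..} \<le> eta pW l k * TT (r - d)" using True r by (intro eta_ge) auto
      hence "measure_pmf.prob pW {r - d..} * (f r - f (r - 1)) \<le> eta pW l k * TT (r - d) * (f r - f (r - 1))"
        using D by (intro mult_right_mono) auto
      moreover have "(if real (r - d) < l \<and> l < real r then f r - f (r - 1) else 0) \<ge> 0" using D by simp
      ultimately show ?thesis by linarith
    next
      case False2: False
      have "measure_pmf.prob pW {r - d..} * (f r - f (r - 1)) \<le> 1 * (f r - f (r - 1))"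
        using D by (intro mult_right_mono) auto
      then show ?thesis using False False2 E by simp
    qed
  qed
qed

lemma phi1_pp: "phi1 r * pp r = max (real r - l) 0"
  using pp_pos[of r] lpos by (simp add: phi1_def)

lemma psi0_pp: "1 \<le> r \<Longrightarrow> psi0 r * pp (r - 1) = max (real r - l) 0 / l"
proof -
  assume r: "1 \<le> r"
  then obtain n where n: "r = Suc n" by (cases r) auto
  have "real r * pp r = l * pp (r - 1)" unfolding n pp_Suc using lpos by simp
  then show ?thesis using pp_pos[of "r - 1"] pp_pos[of r] lpos r
    by (auto simp: psi0_def field_simps)
qed

lemma Sphi1: "(\<Sum>r\<in>{1..k}. TT r * (phi1 r - phi1 (r - 1))) \<le> l + max (real k - l) 0 + (max (real k - l) 0)^2"
proof -
  have "(\<Sum>r\<in>{1..k}. TT (r - 0) * (phi1 r - phi1 (r - 1))) = TT (k - 0) * phi1 k + (\<Sum>r\<in>{1..<k}. phi1 r * pp (r - 0))"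
    by (rule abel) (use lpos in \<open>auto simp: phi1_def\<close>)
  hence e: "(\<Sum>r\<in>{1..k}. TT r * (phi1 r - phi1 (r - 1))) = TT k * phi1 k + (\<Sum>r\<in>{1..<k}. max (real r - l) 0)"
    by (simp add: phi1_pp)
  have "TT k * phi1 k \<le> l + max (real k - l) 0"
  proof (cases "l < real k")
    case True
    have "TT k \<le> pp k * ((real k + 1) / (real k + 1 - l))" using True by (intro tail_bound) auto
    hence "TT k * phi1 k \<le> pp k * ((real k + 1) / (real k + 1 - l)) * phi1 k"
      using phi1_nonneg[of k] by (intro mult_right_mono) auto
    also have "pp k * ((real k + 1) / (real k + 1 - l)) * phi1 k = (real k + 1) * (real k - l) / (real k + 1 - l)"
      using True pp_pos[of k] by (simp add: phi1_def)
    also have "\<dots> \<le> real k" 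
    proof -
      have "(real k + 1) * (real k - l) \<le> real k * (real k + 1 - l)" using lpos by (simp add: algebra_simps)
      then show ?thesis using True by (simp add: divide_le_eq)
    qed
    finally show ?thesis using True by simp
  next
    case False then show ?thesis using lpos by (simp add: phi1_def)
  qed
  then show ?thesis unfolding e using sumA[where k=k and l=l] by simp
qed

lemma Sphi2: "(\<Sum>r\<in>{1..k}. TT r * (real r * phi1 r - real (r - 1) * phi1 (r - 1)))
   \<le> (l + max (real k - l) 0)^2 + real k * (max (real k - l) 0)^2"
proof -
  have "(\<Sum>r\<in>{1..k}. TT (r - 0) * (real r * phi1 r - real (r - 1) * phi1 (r - 1))) = TT (k - 0) * (real k * phi1 k) + (\<Sum>r\<in>{1..<k}. (real r * phi1 r) * pp (r - 0))"
    by (rule abel[where f = "\<lambda>r. real r * phi1 r"]) auto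
  moreover have "(\<Sum>r\<in>{1..<k}. (real r * phi1 r) * pp (r - 0)) = (\<Sum>r\<in>{1..<k}. real r * max (real r - l) 0)"
    by (intro sum.cong refl) (simp add: mult.assoc phi1_pp)
  ultimately have e: "(\<Sum>r\<in>{1..k}. TT r * (real r * phi1 r - real (r - 1) * phi1 (r - 1))) = real k * (TT k * phi1 k) + (\<Sum>r\<in>{1..<k}. real r * max (real r - l) 0)"
    by (simp add: ac_simps)
  have "real k * (TT k * phi1 k) \<le> (l + max (real k - l) 0)^2"
  proof (cases "l < real k")
    case True
    have "TT k \<le> pp k * ((real k + 1) / (real k + 1 - l))" using True by (intro tail_bound) auto
    hence "TT k * phi1 k \<le> pp k * ((real k + 1) / (real k + 1 - l)) * phi1 k"
      using phi1_nonneg[of k] by (intro mult_right_mono) auto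
    also have "pp k * ((real k + 1) / (real k + 1 - l)) * phi1 k = (real k + 1) * (real k - l) / (real k + 1 - l)"
      using True pp_pos[of k] by (simp add: phi1_def)
    also have "\<dots> \<le> real k" 
    proof -
      have "(real k + 1) * (real k - l) \<le> real k * (real k + 1 - l)" using lpos by (simp add: algebra_simps)
      then show ?thesis using True by (simp add: divide_le_eq)
    qed
    finally have "real k * (TT k * phi1 k) \<le> real k * real k" by (intro mult_left_mono) auto
    then show ?thesis using True by (simp add: max_def power2_eq_square)
  next
    case False then show ?thesis using lpos by (simp add: phi1_def)
  qed
  then show ?thesis unfolding e using sumB[where k=k and l=l] by simp
qed

lemma Spsi0: "(\<Sum>r\<in>{1..k}. TT (r - 1) * (psi0 r - psi0 (r - 1)))
   \<le> (if l < real k then real k / l else 0) + (max (real k - l) 0)^2 / l"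
proof -
  have "(\<Sum>r\<in>{1..k}. TT (r - 1) * (psi0 r - psi0 (r - 1))) = TT (k - 1) * psi0 k + (\<Sum>r\<in>{1..<k}. psi0 r * pp (r - 1))"
    by (rule abel) (use lpos in \<open>auto simp: psi0_def\<close>)
  also have "(\<Sum>r\<in>{1..<k}. psi0 r * pp (r - 1)) = (\<Sum>r\<in>{1..<k}. max (real r - l) 0) / l"
    unfolding sum_divide_distrib by (intro sum.cong refl) (metis atLeastLessThan_iff psi0_pp)
  also have "\<dots> \<le> (max (real k - l) 0)^2 / l" using sumA[where k=k and l=l] lpos by (intro divide_right_mono) auto
  finally have e: "(\<Sum>r\<in>{1..k}. TT (r - 1) * (psi0 r - psi0 (r - 1))) \<le> TT (k - 1) * psi0 k + (max (real k - l) 0)^2 / l"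
    by simp
  have "TT (k - 1) * psi0 k \<le> (if l < real k then real k / l else 0)"
  proof (cases "l < real k")
    case True
    hence k1: "k \<ge> 1" using lpos by simp
    hence rk: "real (k - 1) + 1 = real k" by simp
    have "TT (k - 1) \<le> pp (k - 1) * ((real (k - 1) + 1) / (real (k - 1) + 1 - l))" using True rk by (intro tail_bound) auto
    also have "\<dots> = pp (k - 1) * (real k / (real k - l))" unfolding rk ..
    finally have t: "TT (k - 1) \<le> pp (k - 1) * (real k / (real k - l))" .
    have ps: "psi0 k * pp (k - 1) = (real k - l) / l" using psi0_pp[OF k1] True by simp
    have "TT (k - 1) * psi0 k \<le> pp (k - 1) * (real k / (real k - l)) * psi0 k"
      using t psi0_nonneg[of k] by (intro mult_right_mono) auto
    also have "\<dots> = (real k / (real k - l)) * (psi0 k * pp (k - 1))" by (simp add: ac_simps)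
    also have "\<dots> = real k / l" unfolding ps
    proof -
      have ne: "real k - l \<noteq> 0" using True by simp
      show "real k / (real k - l) * ((real k - l) / l) = real k / l" using ne lpos by (simp add: field_simps)
    qed
    finally show ?thesis using True by simp
  next
    case False then show ?thesis by (simp add: psi0_def)
  qed
  then show ?thesis using e by simp
qed

lemma phi1_mono': "1 \<le> r \<Longrightarrow> phi1 (r - 1) \<le> phi1 r"
  using phi1_mono[of "r - 1"] by simp
lemma psi0_mono': "1 \<le> r \<Longrightarrow> psi0 (r - 1) \<le> psi0 r"
  using psi0_mono[of "r - 1"] by simp
lemma phi2_mono': "1 \<le> r \<Longrightarrow> real (r - 1) * phi1 (r - 1) \<le> real r * phi1 r"
  using phi2_mono[of "r - 1"] by simp

lemma layer_bound0:
  fixes f :: "nat \<Rightarrow> real"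
  assumes mono: "\<And>r. 1 \<le> r \<Longrightarrow> f (r - 1) \<le> f r" and zero: "\<And>r. real r \<le> l \<Longrightarrow> f r = f (r - 1)"
    and f0: "f 0 = 0"
  shows "measure_pmf.expectation pW (\<lambda>w. f (min w k)) \<le> eta pW l k * (\<Sum>r\<in>{1..k}. TT r * (f r - f (r - 1)))"
proof -
  have "measure_pmf.expectation pW (\<lambda>w. f (min (w + 0) k)) = f 0 + (\<Sum>r\<in>{1..k}. measure_pmf.prob pW {r - 0..} * (f r - f (r - 1)))"
    by (rule expect_layer)
  hence "measure_pmf.expectation pW (\<lambda>w. f (min w k)) = (\<Sum>r\<in>{1..k}. measure_pmf.prob pW {r - 0..} * (f r - f (r - 1)))"
    using f0 by simp
  also have "\<dots> \<le> (\<Sum>r\<in>{1..k}. eta pW l k * TT (r - 0) * (f r - f (r - 1)) + (if real (r - 0) < l \<and> l < real r then f r - f (r - 1) else 0))"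
    by (intro sum_mono term_cmp mono zero) auto
  also have "\<dots> = (\<Sum>r\<in>{1..k}. eta pW l k * (TT r * (f r - f (r - 1))))"
    by (intro sum.cong refl) auto
  also have "\<dots> = eta pW l k * (\<Sum>r\<in>{1..k}. TT r * (f r - f (r - 1)))"
    by (simp add: sum_distrib_left)
  finally show ?thesis .
qed

lemma special_sum:
  "(\<Sum>r\<in>{1..k}. if real (r - 1) < l \<and> l < real r then psi0 r - psi0 (r - 1) else 0)
     \<le> (if l < real k then (2 * l + 3) / l else 0)"
proof -
  define c where "c = nat \<lceil>l\<rceil>"
  define B where "B = (2 * l + 3) / l"
  have B0: "B \<ge> 0" using lpos by (simp add: B_def)
  have each: "(if real (r - 1) < l \<and> l < real r then psi0 r - psi0 (r - 1) else 0)
      \<le> (if r = c \<and> l < real k then B else 0)" if r: "r \<in> {1..k}" for r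
  proof (cases "real (r - 1) < l \<and> l < real r")
    case True
    have r1: "1 \<le> r" using r by simp
    have rr: "real (r - 1) = real r - 1" using r1 by simp
    have "\<lceil>l\<rceil> = int r" using True rr by (intro ceiling_unique) auto
    hence "r = c" unfolding c_def by simp
    moreover have "l < real k"
    proof -
      have "real r \<le> real k" using r by simp
      then show ?thesis using True by linarith
    qed
    moreover have "psi0 r - psi0 (r - 1) \<le> B"
    proof -
      have p0: "psi0 (r - 1) = 0" using True by (simp add: psi0_def del: of_nat_diff)
      have "psi0 r * pp (r - 1) = (real r - l) / l" using psi0_pp[OF r1] True by simp
      hence "psi0 r = (real r - l) / (l * pp (r - 1))" using pp_pos[of "r - 1"] lpos
        by (metis divide_divide_eq_left mult.commute nonzero_mult_div_cancel_left order_less_irrefl)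
      also have "\<dots> \<le> 1 / (l * pp (r - 1))"
        using True rr lpos pp_pos[of "r - 1"] by (intro divide_right_mono) auto
      also have "\<dots> \<le> 1 / (l * (1 / (2 * l + 3)))"
      proof -
        have pm: "pp (r - 1) \<ge> 1 / (2 * l + 3)" by (rule mode_lower) (use True rr in auto)
        have a1: "l * (1 / (2 * l + 3)) \<le> l * pp (r - 1)" using pm lpos by (intro mult_left_mono) auto
        have a2: "0 < l * pp (r - 1) * (l * (1 / (2 * l + 3)))"
          using lpos pp_pos[of "r - 1"] by (intro mult_pos_pos) auto
        show ?thesis by (rule divide_left_mono[OF a1 _ a2]) simp
      qed
      also have "\<dots> = B" using lpos by (simp add: B_def)
      finally show ?thesis using p0 by simp
    qed
    ultimately show ?thesis using True B0 by (simp del: of_nat_diff)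
  next
    case False
    have "0 \<le> (if r = c \<and> l < real k then B else 0)" using B0 by simp
    then show ?thesis unfolding if_not_P[OF False] .
  qed
  have "(\<Sum>r\<in>{1..k}. if real (r - 1) < l \<and> l < real r then psi0 r - psi0 (r - 1) else 0)
      \<le> (\<Sum>r\<in>{1..k}. if r = c \<and> l < real k then B else 0)"
    by (rule sum_mono) (rule each)
  also have "\<dots> \<le> (if l < real k then B else 0)"
    using B0 by (cases "l < real k") (auto simp: sum.delta)
  finally show ?thesis unfolding B_def .
qed

lemma layer_bound1:
  "measure_pmf.expectation pW (\<lambda>w. psi0 (min (w + 1) k))
     \<le> eta pW l k * ((if l < real k then real k / l else 0) + (max (real k - l) 0)^2 / l)
        + (if l < real k then (2 * l + 3) / l else 0)"
proof -
  have "measure_pmf.expectation pW (\<lambda>w. psi0 (min (w + 1) k)) = psi0 0 + (\<Sum>r\<in>{1..k}. measure_pmf.prob pW {r - 1..} * (psi0 r - psi0 (r - 1)))"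
    by (rule expect_layer)
  also have "psi0 0 = 0" using lpos by (simp add: psi0_def)
  also have "(\<Sum>r\<in>{1..k}. measure_pmf.prob pW {r - 1..} * (psi0 r - psi0 (r - 1)))
     \<le> (\<Sum>r\<in>{1..k}. eta pW l k * TT (r - 1) * (psi0 r - psi0 (r - 1)) + (if real (r - 1) < l \<and> l < real r then psi0 r - psi0 (r - 1) else 0))"
    by (intro sum_mono term_cmp psi0_mono') (auto simp: psi0_def)
  also have "\<dots> = eta pW l k * (\<Sum>r\<in>{1..k}. TT (r - 1) * (psi0 r - psi0 (r - 1)))
      + (\<Sum>r\<in>{1..k}. if real (r - 1) < l \<and> l < real r then psi0 r - psi0 (r - 1) else 0)"
    by (simp add: sum.distrib sum_distrib_left mult.assoc)
  also have "\<dots> \<le> eta pW l k * ((if l < real k then real k / l else 0) + (max (real k - l) 0)^2 / l)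
        + (if l < real k then (2 * l + 3) / l else 0)"
    using eta_nonneg Spsi0 special_sum by (intro add_mono mult_left_mono) auto
  finally show ?thesis by simp
qed

lemma bound1:
  "measure_pmf.expectation pW (\<lambda>w. g1 l (min (w + 1) k))
     \<le> 5 * (eta pW l k + 1) * (1 / l + (pos_part (real k + 1 - l))^2 / l^2)"
proof -
  have i1: "integrable (measure_pmf pW) (\<lambda>w. g1 l (min (w + 1) k))"
    by (rule integrable_min)
  have i2: "integrable (measure_pmf pW) (\<lambda>w. psi0 (min (w + 1) k))"
    by (rule integrable_min)
  have i3: "integrable (measure_pmf pW) (\<lambda>w. 1 / l + psi0 (min (w + 1) k) / l)"
    using i2 by simp
  have "measure_pmf.expectation pW (\<lambda>w. g1 l (min (w + 1) k)) \<le> measure_pmf.expectation pW (\<lambda>w. 1 / l + psi0 (min (w + 1) k) / l)"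
    by (rule integral_mono[OF i1 i3]) (rule g1_bound)
  also have "\<dots> = 1 / l + measure_pmf.expectation pW (\<lambda>w. psi0 (min (w + 1) k)) / l"
    using i2 by simp
  also have "\<dots> \<le> 1 / l + (eta pW l k * ((if l < real k then real k / l else 0) + (max (real k - l) 0)^2 / l)
        + (if l < real k then (2 * l + 3) / l else 0)) / l"
    using layer_bound1 lpos by (intro add_left_mono divide_right_mono) auto
  also have "\<dots> \<le> 5 * (eta pW l k + 1) * (1 / l + (max (real k + 1 - l) 0)^2 / l^2)"
    by (rule fin1[OF lpos eta_nonneg]) simp
  finally show ?thesis by (simp add: pos_part_def)
qed

lemma bound2:
  "measure_pmf.expectation pW (\<lambda>w. real (min w k) * g1 l (min w k))
     \<le> 5 * (eta pW l k + 1) * (1 + (pos_part (real k - l))^2 / l)"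
proof -
  have i1: "integrable (measure_pmf pW) (\<lambda>w. real (min w k) * g1 l (min w k))"
    using integrable_min[where pW=pW and h="\<lambda>j. real j * g1 l j" and d=0 and k=k] by simp
  have i2: "integrable (measure_pmf pW) (\<lambda>w. phi1 (min w k))"
    using integrable_min[where pW=pW and h="phi1" and d=0 and k=k] by simp
  have i3: "integrable (measure_pmf pW) (\<lambda>w. 1 + phi1 (min w k) / l)"
    using i2 by simp
  have "measure_pmf.expectation pW (\<lambda>w. real (min w k) * g1 l (min w k)) \<le> measure_pmf.expectation pW (\<lambda>w. 1 + phi1 (min w k) / l)"
    by (rule integral_mono[OF i1 i3]) (rule wg1_bound)
  also have "\<dots> = 1 + measure_pmf.expectation pW (\<lambda>w. phi1 (min w k)) / l"
    using i2 by simp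
  also have "measure_pmf.expectation pW (\<lambda>w. phi1 (min w k)) \<le> eta pW l k * (\<Sum>r\<in>{1..k}. TT r * (phi1 r - phi1 (r - 1)))"
    by (rule layer_bound0) (use phi1_mono' lpos in \<open>auto simp: phi1_def\<close>)
  also have "\<dots> \<le> eta pW l k * (l + max (real k - l) 0 + (max (real k - l) 0)^2)"
    by (intro mult_left_mono Sphi1 eta_nonneg)
  also have "1 + eta pW l k * (l + max (real k - l) 0 + (max (real k - l) 0)^2) / l
     \<le> 5 * (eta pW l k + 1) * (1 + (max (real k - l) 0)^2 / l)"
    by (rule fin2[OF lpos eta_nonneg]) (use lpos in \<open>cases k, auto\<close>)
  finally show ?thesis using lpos by (simp add: pos_part_def divide_right_mono)
qed

lemma bound3:
  assumes intW: "integrable (measure_pmf pW) real" and EW: "measure_pmf.expectation pW real = l"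
  shows "measure_pmf.expectation pW (\<lambda>w. (real (min w k))^2 * g1 l (min w k))
     \<le> 5 * (eta pW l k + 1) * (l + (pos_part (real k - l))^2 + (pos_part (real k - l))^3 / l)"
proof -
  have i1: "integrable (measure_pmf pW) (\<lambda>w. (real (min w k))^2 * g1 l (min w k))"
    using integrable_min[where pW=pW and h="\<lambda>j. (real j)^2 * g1 l j" and d=0 and k=k] by simp
  have i2: "integrable (measure_pmf pW) (\<lambda>w. real (min w k) * phi1 (min w k))"
    using integrable_min[where pW=pW and h="\<lambda>j. real j * phi1 j" and d=0 and k=k] by simp
  have i4: "integrable (measure_pmf pW) (\<lambda>w. real (min w k))"
    using integrable_min[where pW=pW and h="\<lambda>j. real j" and d=0 and k=k] by simp
  have i3: "integrable (measure_pmf pW) (\<lambda>w. real (min w k) + real (min w k) * phi1 (min w k) / l)"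
    using i2 i4 by simp
  have pt: "(real (min w k))^2 * g1 l (min w k) \<le> real (min w k) + real (min w k) * phi1 (min w k) / l" for w
  proof -
    have "(real (min w k))^2 * g1 l (min w k) = real (min w k) * (real (min w k) * g1 l (min w k))"
      by (simp add: power2_eq_square)
    also have "\<dots> \<le> real (min w k) * (1 + phi1 (min w k) / l)"
      by (intro mult_left_mono wg1_bound) auto
    finally show ?thesis by (simp add: algebra_simps)
  qed
  have "measure_pmf.expectation pW (\<lambda>w. (real (min w k))^2 * g1 l (min w k))
      \<le> measure_pmf.expectation pW (\<lambda>w. real (min w k) + real (min w k) * phi1 (min w k) / l)"
    by (rule integral_mono[OF i1 i3]) (rule pt)
  also have "\<dots> = measure_pmf.expectation pW (\<lambda>w. real (min w k)) + measure_pmf.expectation pW (\<lambda>w. real (min w k) * phi1 (min w k)) / l"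
    using i2 i4 by simp
  also have "measure_pmf.expectation pW (\<lambda>w. real (min w k)) \<le> l"
  proof -
    have "measure_pmf.expectation pW (\<lambda>w. real (min w k)) \<le> measure_pmf.expectation pW real"
      by (rule integral_mono[OF i4 intW]) simp
    then show ?thesis using EW by simp
  qed
  also have "measure_pmf.expectation pW (\<lambda>w. real (min w k) * phi1 (min w k))
     \<le> eta pW l k * (\<Sum>r\<in>{1..k}. TT r * (real r * phi1 r - real (r - 1) * phi1 (r - 1)))"
    by (rule layer_bound0[where f = "\<lambda>j. real j * phi1 j"]) (use phi2_mono' lpos in \<open>auto simp: phi1_def\<close>)
  also have "\<dots> \<le> eta pW l k * ((l + max (real k - l) 0)^2 + real k * (max (real k - l) 0)^2)"
    by (intro mult_left_mono Sphi2 eta_nonneg)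
  also have "l + eta pW l k * ((l + max (real k - l) 0)^2 + real k * (max (real k - l) 0)^2) / l
     \<le> 5 * (eta pW l k + 1) * (l + (max (real k - l) 0)^2 + (max (real k - l) 0)^3 / l)"
    by (rule fin3[OF lpos eta_nonneg]) (use lpos in \<open>cases k, auto\<close>)
  finally show ?thesis using lpos by (simp add: pos_part_def divide_right_mono)
qed

end

theorem lemma4p5:
  "\<exists>C::real. \<forall>(pW::nat pmf) (lam::real) (k::nat).
     lam > 0 \<and> integrable (measure_pmf pW) real \<and> measure_pmf.expectation pW real = lam \<longrightarrow>
     measure_pmf.expectation pW (\<lambda>w. g1 lam (min (w + 1) k))
        \<le> C * (eta pW lam k + 1) * (1 / lam + (pos_part (real k + 1 - lam))^2 / lam^2)
   \<and> measure_pmf.expectation pW (\<lambda>w. real (min w k) * g1 lam (min w k))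
        \<le> C * (eta pW lam k + 1) * (1 + (pos_part (real k - lam))^2 / lam)
   \<and> measure_pmf.expectation pW (\<lambda>w. (real (min w k))^2 * g1 lam (min w k))
        \<le> C * (eta pW lam k + 1) * (lam + (pos_part (real k - lam))^2 + (pos_part (real k - lam))^3 / lam)"
proof (intro exI[of _ 5] allI impI conjI)
  fix pW :: "nat pmf" and lam :: real and k :: nat
  assume a: "lam > 0 \<and> integrable (measure_pmf pW) real \<and> measure_pmf.expectation pW real = lam"
  show "measure_pmf.expectation pW (\<lambda>w. g1 lam (min (w + 1) k))
        \<le> 5 * (eta pW lam k + 1) * (1 / lam + (pos_part (real k + 1 - lam))^2 / lam^2)"
    using bound1 a by blast
  show "measure_pmf.expectation pW (\<lambda>w. real (min w k) * g1 lam (min w k))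
        \<le> 5 * (eta pW lam k + 1) * (1 + (pos_part (real k - lam))^2 / lam)"
    using bound2 a by blast
  show "measure_pmf.expectation pW (\<lambda>w. (real (min w k))^2 * g1 lam (min w k))
        \<le> 5 * (eta pW lam k + 1) * (lam + (pos_part (real k - lam))^2 + (pos_part (real k - lam))^3 / lam)"
    using bound3 a by blast
qed

end
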